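(* Let $h>0$ and let $\nu\in\mathfrak N_{\rceil\cdot\lfloor_h}(X)$ be such that $D_\mu\nu\in H^\omega(X)$. Then \[ \|D_\mu\nu\|_{\mathcal B(X)}\le\|D_\mu\nu-\overline S_h\nu\|_{\mathcal B(X)}+\frac{\rceil\nu\lfloor_h}{\mu(B_h)}\le\frac{\|D_\mu\nu\|_{H^\omega(X)}}{\mu(B_h)}\int_{B_h}\omega(\rho(u,\theta))\,d\mu(u)+\frac{\rceil\nu\lfloor_h}{\mu(B_h)}, \] where $\overline S_h\nu(x)=\frac{\nu(x+B_h)}{\mu(B_h)}$ (an operator $\mathfrak N_{\rceil\cdot\lfloor_h}(X)\to\mathcal B(X)$ of norm $1/\mu(B_h)$). The inequality is sharp: it becomes an equality for the charge $\nu_{e,h}$ with $D_\mu\nu_{e,h}(x)=(\omega(h)-\omega(\rho(x,\theta)))_+$.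
   Context: Standing setting: $(X,\rho)$ is a metric space with a Borel measure $\mu$. $X$ is a commutative monoid, i.e. there is an associative and commutative binary operation $+$ on $X$ with a neutral element $\theta$. The measure is translation invariant: $\mu(x+Q)=\mu(Q)$ for every $\mu$-measurable $Q\subset X$ and every $x\in X$; correspondingly $\int_{B_h}g(x+u)\,d\mu(u)=\int_{x+B_h}g(u)\,d\mu(u)$ for locally integrable $g$. Moreover $\rho(x+y,x)\le\rho(y,\theta)$ for all $x,y\in X$. $B_h$ denotes the open ball of radius $h$ centered at $\theta$, and it is assumed that $0<\mu(B_h)<\infty$ and $B_h\neq\{\theta\}$ for every $h>0$. Every continuous real function on $X$ is integrable on every open ball. For a function $f$, $\|f\|_{\mathcal B(X)}=\sup_{x\in X}|f(x)|$. $\alpha_+=\max\{\alpha,0\}$. A modulus of continuity is a function $\omega\colon[0,\infty)\to[0,\infty)$ that is non-decreasing, semi-additive ($\omega(s+t)\le\omega(s)+\omega(t)$), with $\omega(0)=0$, and not identically zero. $H^\omega(X)$ is the space of $f\colon X\to\mathbb R$ with $\|f\|_{H^\omega(X)}:=\sup_{x\neq y}\frac{|f(x)-f(y)|}{\omega(\rho(x,y))}<\infty$. $\mathfrak N(X)$ is the linear space of charges (signed measures) $\nu$ defined on the $\mu$-measurable subsets of $X$ that are absolutely continuous with respect to $\mu$; for such $\nu$ the Radon–Nikodym derivative $D_\mu\nu$ is the integrable function $f$ with $\nu(Q)=\int_Qf\,d\mu$ for all measurable $Q$. For $h>0$, $\rceil\nu\lfloor_h=\sup_{x\in X}|\nu(x+B_h)|$,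 and $\mathfrak N_{\rceil\cdot\lfloor_h}(X)$ is the set of $\nu\in\mathfrak N(X)$ with $\rceil\nu\lfloor_h<\infty$. *)

theory Defs
  imports "HOL-Analysis.Analysis"
begin

definition modulus_of_continuity :: "(real \<Rightarrow> real) \<Rightarrow> bool" where
  "modulus_of_continuity \<omega> \<longleftrightarrow>
     mono_on {0..} \<omega> \<and> (\<forall>t\<ge>0. \<omega> t \<ge> 0) \<and>
     (\<forall>s\<ge>0. \<forall>t\<ge>0. \<omega> (s + t) \<le> \<omega> s + \<omega> t) \<and>
     \<omega> 0 = 0 \<and> (\<exists>t\<ge>0. \<omega> t \<noteq> 0)"

definition sup_norm :: "('a \<Rightarrow> real) \<Rightarrow> ereal" where
  "sup_norm f = (SUP x. ereal \<bar>f x\<bar>)"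

definition H_norm :: "(real \<Rightarrow> real) \<Rightarrow> ('a::metric_space \<Rightarrow> real) \<Rightarrow> ereal" where
  "H_norm \<omega> f = (SUP p\<in>{(x, y). x \<noteq> y}. ereal (\<bar>f (fst p) - f (snd p)\<bar> / \<omega> (dist (fst p) (snd p))))"

abbreviation B0 :: "real \<Rightarrow> 'a::{metric_space, comm_monoid_add} set" where
  "B0 h \<equiv> ball 0 h"

abbreviation transl :: "'a::comm_monoid_add \<Rightarrow> 'a set \<Rightarrow> 'a set" where
  "transl x Q \<equiv> (\<lambda>u. x + u) ` Q"

definition charge_norm :: "('a::{metric_space, comm_monoid_add} set \<Rightarrow> real) \<Rightarrow> real \<Rightarrow> ereal" where
  "charge_norm \<nu> h = (SUP x. ereal \<bar>\<nu> (transl x (B0 h))\<bar>)"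

definition Sbar :: "'a::{metric_space, comm_monoid_add} measure \<Rightarrow> ('a set \<Rightarrow> real) \<Rightarrow> real \<Rightarrow> 'a \<Rightarrow> real" where
  "Sbar M \<nu> h x = \<nu> (transl x (B0 h)) / measure M (B0 h)"

text \<open>nu is a charge on the M-measurable sets, absolutely continuous w.r.t. M, with
  Radon-Nikodym derivative (density) f.\<close>
definition charge_with_density :: "'a measure \<Rightarrow> ('a set \<Rightarrow> real) \<Rightarrow> ('a \<Rightarrow> real) \<Rightarrow> bool" where
  "charge_with_density M \<nu> f \<longleftrightarrow>
     integrable M f \<and> (\<forall>Q\<in>sets M. \<nu> Q = set_lebesgue_integral M Q f)"

definition standing :: "'a::{metric_space, comm_monoid_add} measure \<Rightarrow> bool" where
  "standing M \<longleftrightarrow>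
     space M = UNIV \<and> sets borel \<subseteq> sets M \<and>
     (\<forall>Q\<in>sets M. \<forall>x. transl x Q \<in> sets M \<and> emeasure M (transl x Q) = emeasure M Q) \<and>
     (\<forall>g::'a \<Rightarrow> real. \<forall>x. \<forall>h>0.
        (\<forall>c r. r > 0 \<longrightarrow> set_integrable M (ball c r) g) \<longrightarrow>
        set_lebesgue_integral M (B0 h) (\<lambda>u. g (x + u)) = set_lebesgue_integral M (transl x (B0 h)) g) \<and>
     (\<forall>x y::'a. dist (x + y) x \<le> dist y 0) \<and>
     (\<forall>h>0. 0 < emeasure M (B0 h) \<and> emeasure M (B0 h) < \<infinity> \<and> B0 h \<noteq> {0::'a}) \<and>
     (\<forall>g::'a \<Rightarrow> real. continuous_on UNIV g \<longrightarrow>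
        (\<forall>c r. r > 0 \<longrightarrow> set_integrable M (ball c r) g))"

end

theory Submission
  imports Defs
begin


lemma omega_pos:
  assumes "modulus_of_continuity \<omega>" "t > 0" shows "\<omega> t > 0"
proof (rule ccontr)
  assume "\<not> \<omega> t > 0"
  have mo: "mono_on {0..} \<omega>" and nn: "\<And>t. t \<ge> 0 \<Longrightarrow> \<omega> t \<ge> 0"
    and sa: "\<And>s t. s \<ge> 0 \<Longrightarrow> t \<ge> 0 \<Longrightarrow> \<omega> (s + t) \<le> \<omega> s + \<omega> t"
    using assms(1) unfolding modulus_of_continuity_def by auto
  obtain s where s: "s \<ge> 0" "\<omega> s \<noteq> 0" using assms(1) unfolding modulus_of_continuity_def by auto
  have z: "\<omega> t = 0" using \<open>\<not> \<omega> t > 0\<close> nn[of t] assms(2) by auto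
  have nz: "\<omega> (real n * t) = 0" for n
  proof (induction n)
    case 0 then show ?case using assms(1) unfolding modulus_of_continuity_def by simp
  next
    case (Suc n)
    have "\<omega> (real (Suc n) * t) = \<omega> (real n * t + t)" by (simp add: algebra_simps)
    also have "\<dots> \<le> \<omega> (real n * t) + \<omega> t" using sa assms(2) by simp
    finally show ?case using Suc z nn[of "real (Suc n) * t"] assms(2) by simp
  qed
  obtain n where n: "s \<le> real n * t"
  proof -
    obtain n where "s / t \<le> real n" using real_arch_simple by blast
    then have "s \<le> real n * t" using assms(2) by (simp add: field_simps)
    then show ?thesis using that by blast
  qed
  have "\<omega> s \<le> \<omega> (real n * t)" using mo s n unfolding mono_on_def by auto
  then show False using nz[of n] nn[of s] s by simp
qed

lemma omega_meas:
  assumes "standing M" "modulus_of_continuity \<omega>"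
  shows "(\<lambda>u::'a::{metric_space, comm_monoid_add}. \<omega> (dist u c)) \<in> borel_measurable M"
proof -
  have mo: "mono_on {0..} \<omega>" using assms(2) unfolding modulus_of_continuity_def by auto
  have m: "mono (\<lambda>t. \<omega> (max t 0))"
    using mo unfolding mono_def mono_on_def by (auto simp: max_def)
  have "(\<lambda>u::'a. (\<lambda>t. \<omega> (max t 0)) (dist u c)) \<in> borel_measurable borel"
    using borel_measurable_mono[OF m] by (intro measurable_compose[OF _ borel_measurable_mono[OF m]]) 
         (intro borel_measurable_continuous_onI continuous_intros)
  then have "(\<lambda>u::'a. \<omega> (dist u c)) \<in> borel_measurable borel" by simp
  moreover have "sets borel \<subseteq> sets M" "space borel = space M" using assms(1) unfolding standing_def by auto
  ultimately show ?thesis using borel_measurable_subalgebra by blast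
qed



context
  fixes M :: "'a::{metric_space, comm_monoid_add} measure"
  assumes st: "standing M"
begin

lemma st_ball_sets: "ball c r \<in> sets M"
proof -
  have "ball c r \<in> sets borel" by simp
  then show ?thesis using st unfolding standing_def by blast
qed

lemma st_transl_sets: "Q \<in> sets M \<Longrightarrow> transl x Q \<in> sets M"
  and st_transl_meas: "Q \<in> sets M \<Longrightarrow> emeasure M (transl x Q) = emeasure M Q"
  using st unfolding standing_def by blast+

lemma st_B_fin: "h > 0 \<Longrightarrow> emeasure M (B0 h) < \<infinity>"
  and st_B_pos: "h > 0 \<Longrightarrow> 0 < emeasure M (B0 h)"
  and st_B_ne: "h > 0 \<Longrightarrow> B0 h \<noteq> {0::'a}"
  using st unfolding standing_def by blast+

lemma st_dist: "dist (x + y) x \<le> dist y (0::'a)"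
  using st unfolding standing_def by blast

lemma st_cont_int: "continuous_on UNIV g \<Longrightarrow> r > 0 \<Longrightarrow> set_integrable M (ball c r) (g::'a\<Rightarrow>real)"
  using st unfolding standing_def by blast

lemma st_const_int: "r > 0 \<Longrightarrow> set_integrable M (ball c r) (\<lambda>_::'a. k::real)"
  by (rule st_cont_int) (auto intro: continuous_intros)

lemma st_transl_formula:
  "(\<And>c r. r > 0 \<Longrightarrow> set_integrable M (ball c r) g) \<Longrightarrow> h > 0 \<Longrightarrow>
   set_lebesgue_integral M (B0 h) (\<lambda>u. g (x + u)) = set_lebesgue_integral M (transl x (B0 h)) (g::'a \<Rightarrow> real)"
  using st unfolding standing_def by blast

lemma st_measure_pos: "h > 0 \<Longrightarrow> measure M (B0 h) > 0"
  using st_B_fin st_B_pos by (simp add: measure_def enn2real_positive_iff)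

lemma st_transl_measure: "h > 0 \<Longrightarrow> measure M (transl x (B0 h)) = measure M (B0 h)"
  using st_transl_meas[OF st_ball_sets] by (simp add: measure_def)

lemma st_transl_sub: "transl x (B0 h) \<subseteq> ball (x::'a) h"
proof
  fix v assume "v \<in> transl x (B0 h)"
  then obtain u where u: "v = x + u" "dist 0 u < h" by auto
  have "dist (x + u) x \<le> dist u 0" by (rule st_dist)
  then show "v \<in> ball x h" using u by (simp add: dist_commute)
qed

lemma st_trans_int:
  assumes loc: "\<And>c r. r > 0 \<Longrightarrow> set_integrable M (ball c r) g" and h: "h > 0"
  shows "set_integrable M (B0 h) (\<lambda>u. (g::'a \<Rightarrow> real) (x + u))"
proof (rule ccontr)
  assume ni: "\<not> ?thesis"
  define g1 where "g1 = (\<lambda>v. g v + 1)"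
  have loc1: "set_integrable M (ball c r) g1" if "r > 0" for c r
    unfolding g1_def by (rule set_integral_add(1)[OF loc[OF that] st_const_int[OF that]])
  have ni1: "\<not> set_integrable M (B0 h) (\<lambda>u. g1 (x + u))"
  proof
    assume "set_integrable M (B0 h) (\<lambda>u. g1 (x + u))"
    from set_integral_diff(1)[OF this st_const_int[OF h, of 0 1]]
    show False using ni by (simp add: g1_def)
  qed
  have z: "set_lebesgue_integral M (B0 h) (\<lambda>u. g (x + u)) = 0"
    using ni unfolding set_integrable_def set_lebesgue_integral_def by (rule not_integrable_integral_eq)
  have z1: "set_lebesgue_integral M (B0 h) (\<lambda>u. g1 (x + u)) = 0"
    using ni1 unfolding set_integrable_def set_lebesgue_integral_def by (rule not_integrable_integral_eq)
  let ?T = "transl x (B0 h)"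
  have Ts: "?T \<in> sets M" by (rule st_transl_sets[OF st_ball_sets])
  have ig: "set_integrable M ?T g" by (rule set_integrable_subset[OF loc[OF h] Ts st_transl_sub])
  have i1: "set_integrable M ?T (\<lambda>_. 1::real)" by (rule set_integrable_subset[OF st_const_int[OF h] Ts st_transl_sub])
  have "0 = set_lebesgue_integral M ?T g1" using z1 st_transl_formula[OF loc1 h] by simp
  also have "\<dots> = set_lebesgue_integral M ?T g + set_lebesgue_integral M ?T (\<lambda>_. 1::real)"
    unfolding g1_def by (rule set_integral_add(2)[OF ig i1])
  also have "set_lebesgue_integral M ?T g = 0" using z st_transl_formula[OF loc h] by simp
  also have "set_lebesgue_integral M ?T (\<lambda>_. 1::real) = measure M ?T"
  proof -
    have "emeasure M ?T \<noteq> \<infinity>" using st_transl_meas[OF st_ball_sets, of x 0 h] st_B_fin[OF h] by simp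
    from set_integral_const[OF Ts this, of "1::real"] show ?thesis by (simp only: real_scaleR_def mult_1_right)
  qed
  finally show False using st_transl_measure[OF h] st_measure_pos[OF h] by simp
qed

end


context
  fixes M :: "'a::{metric_space, comm_monoid_add} measure" and \<omega> :: "real \<Rightarrow> real" and h :: real
  assumes st: "standing M" and om: "modulus_of_continuity \<omega>" and hp: "h > 0"
begin

lemma om_mono: "0 \<le> s \<Longrightarrow> s \<le> t \<Longrightarrow> \<omega> s \<le> \<omega> t"
  using om unfolding modulus_of_continuity_def mono_on_def by auto

lemma om_nn: "0 \<le> s \<Longrightarrow> 0 \<le> \<omega> s"
  using om unfolding modulus_of_continuity_def by auto

lemma om_bounds: "u \<in> B0 h \<Longrightarrow> 0 \<le> \<omega> (dist u (0::'a)) \<and> \<omega> (dist u 0) \<le> \<omega> h"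
  using om_mono[of "dist u 0" h] om_nn[of "dist u 0"] by (auto simp: dist_commute)

lemma om_int: "set_integrable M (B0 h) (\<lambda>u::'a. \<omega> (dist u 0))"
proof (rule set_integrable_bound[OF st_const_int[OF st hp, of 0 "\<omega> h"]])
  show "set_borel_measurable M (B0 h) (\<lambda>u::'a. \<omega> (dist u 0))"
    unfolding set_borel_measurable_def
    by (intro borel_measurable_scaleR borel_measurable_indicator st_ball_sets[OF st] omega_meas[OF st om])
  show "AE x\<in>B0 h in M. norm (\<omega> (dist x 0)) \<le> norm (\<omega> h)"
  proof (intro AE_I2 impI)
    fix u :: 'a assume "u \<in> B0 h"
    then show "norm (\<omega> (dist u 0)) \<le> norm (\<omega> h)" using om_bounds[of u] by auto
  qed
qed

lemma pointwise:
  assumes cd: "charge_with_density M \<nu> f" and H: "H \<ge> 0"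
    and Hf: "\<And>x y. \<bar>f x - f y\<bar> \<le> H * \<omega> (dist x y)"
  shows "\<bar>f x - Sbar M \<nu> h x\<bar> \<le> H * set_lebesgue_integral M (B0 h) (\<lambda>u. \<omega> (dist u 0)) / measure M (B0 h)"
proof -
  let ?B = "B0 h :: 'a set" and ?T = "transl x (B0 h :: 'a set)" and ?m = "measure M (B0 h :: 'a set)"
  let ?I = "set_lebesgue_integral M (B0 h) (\<lambda>u::'a. \<omega> (dist u 0))"
  have fi: "integrable M f" and nu: "\<And>Q. Q \<in> sets M \<Longrightarrow> \<nu> Q = set_lebesgue_integral M Q f"
    using cd unfolding charge_with_density_def by auto
  have loc: "set_integrable M (ball c r) f" for c r
    unfolding set_integrable_def by (rule integrable_mult_indicator[OF st_ball_sets[OF st] fi])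
  have Ts: "?T \<in> sets M" by (rule st_transl_sets[OF st st_ball_sets[OF st]])
  have nuT: "\<nu> ?T = set_lebesgue_integral M ?B (\<lambda>u. f (x + u))"
    using nu[OF Ts] st_transl_formula[OF st loc hp] by simp
  have fin: "emeasure M ?B \<noteq> \<infinity>" using st_B_fin[OF st hp] by simp
  have fxm: "f x * ?m = set_lebesgue_integral M ?B (\<lambda>u. f x)"
    using set_integral_const[OF st_ball_sets[OF st] fin, of "f x"] by simp
  have i1: "set_integrable M ?B (\<lambda>u. f x)" by (rule st_const_int[OF st hp])
  have i2: "set_integrable M ?B (\<lambda>u. f (x + u))" by (rule st_trans_int[OF st loc hp])
  have iH: "set_integrable M ?B (\<lambda>u. H * \<omega> (dist u 0))"
    using om_int unfolding set_integrable_def by (simp add: integrable_mult_right mult.left_commute)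
  have bnd: "\<bar>f x - f (x + u)\<bar> \<le> H * \<omega> (dist u 0)" for u
  proof -
    have "dist x (x + u) \<le> dist u 0" using st_dist[OF st, of x u] by (simp add: dist_commute)
    then have "\<omega> (dist x (x + u)) \<le> \<omega> (dist u 0)" by (intro om_mono) auto
    then have "H * \<omega> (dist x (x + u)) \<le> H * \<omega> (dist u 0)" using H by (rule mult_left_mono)
    then show ?thesis using Hf[of x "x + u"] by linarith
  qed
  have D: "f x * ?m - \<nu> ?T = set_lebesgue_integral M ?B (\<lambda>u. f x - f (x + u))"
    using fxm nuT set_integral_diff(2)[OF i1 i2] by simp
  have D2: "\<nu> ?T - f x * ?m = set_lebesgue_integral M ?B (\<lambda>u. f (x + u) - f x)"
    using fxm nuT set_integral_diff(2)[OF i2 i1] by simp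
  have "set_lebesgue_integral M ?B (\<lambda>u. f x - f (x + u)) \<le> set_lebesgue_integral M ?B (\<lambda>u. H * \<omega> (dist u 0))"
    using bnd by (intro set_integral_mono[OF set_integral_diff(1)[OF i1 i2] iH]) (auto simp: abs_le_iff)
  moreover have "set_lebesgue_integral M ?B (\<lambda>u. f (x + u) - f x) \<le> set_lebesgue_integral M ?B (\<lambda>u. H * \<omega> (dist u 0))"
    using bnd by (intro set_integral_mono[OF set_integral_diff(1)[OF i2 i1] iH]) (auto simp: abs_le_iff)
  ultimately have "\<bar>f x * ?m - \<nu> ?T\<bar> \<le> H * ?I"
    unfolding set_integral_mult_right abs_le_iff using D D2 by linarith
  moreover have mp: "?m > 0" by (rule st_measure_pos[OF st hp])
  moreover have "f x - Sbar M \<nu> h x = (f x * ?m - \<nu> ?T) / ?m"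
    using mp unfolding Sbar_def by (simp add: field_simps)
  ultimately show ?thesis by (simp add: abs_divide divide_right_mono)
qed

end


lemma H_lemma:
  fixes M :: "'a::{metric_space, comm_monoid_add} measure" and f :: "'a \<Rightarrow> real" and h :: real
  assumes st: "standing M" and om: "modulus_of_continuity \<omega>" and hp: "h > 0"
    and Hfin: "H_norm \<omega> f < \<infinity>"
  obtains H where "H \<ge> 0" "H_norm \<omega> f = ereal H" "\<And>x y. \<bar>f x - f y\<bar> \<le> H * \<omega> (dist x y)"
proof -
  have "B0 h \<noteq> {0::'a}" "(0::'a) \<in> B0 h" using st_B_ne[OF st hp] hp by auto
  then obtain u :: 'a where u: "u \<in> B0 h" "u \<noteq> 0" by blast
  have "0 \<le> H_norm \<omega> f" unfolding H_norm_def
    by (rule SUP_upper2[of "(u, 0)"]) (use u omega_pos[OF om, of "dist u 0"] in auto)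
  then obtain H where H: "H_norm \<omega> f = ereal H" "H \<ge> 0" using Hfin
    by (cases "H_norm \<omega> f") auto
  have "\<bar>f x - f y\<bar> \<le> H * \<omega> (dist x y)" for x y
  proof (cases "x = y")
    case False
    have "ereal (\<bar>f x - f y\<bar> / \<omega> (dist x y)) \<le> H_norm \<omega> f" unfolding H_norm_def
      by (rule SUP_upper2[of "(x, y)"]) (use False in auto)
    then have "\<bar>f x - f y\<bar> / \<omega> (dist x y) \<le> H" using H by simp
    moreover have "\<omega> (dist x y) > 0" using omega_pos[OF om] False by simp
    ultimately show ?thesis by (simp add: divide_le_eq mult.commute)
  qed (use H om in \<open>simp add: modulus_of_continuity_def\<close>)
  then show ?thesis using that H by blast
qed

lemma C_lemma:
  fixes \<nu> :: "'a::{metric_space, comm_monoid_add} set \<Rightarrow> real"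
  assumes "charge_norm \<nu> h < \<infinity>"
  obtains C where "C \<ge> 0" "charge_norm \<nu> h = ereal C" "\<And>x. \<bar>\<nu> (transl x (B0 h))\<bar> \<le> C"
proof -
  have "0 \<le> charge_norm \<nu> h" unfolding charge_norm_def
    by (rule SUP_upper2[of 0]) auto
  then obtain C where C: "charge_norm \<nu> h = ereal C" "C \<ge> 0" using assms
    by (cases "charge_norm \<nu> h") auto
  have "ereal \<bar>\<nu> (transl x (B0 h))\<bar> \<le> charge_norm \<nu> h" for x
    unfolding charge_norm_def by (rule SUP_upper) auto
  then show ?thesis using that C by auto
qed

lemma om_lip:
  assumes om: "modulus_of_continuity \<omega>" and "p \<ge> 0" "q \<ge> 0"
  shows "\<bar>\<omega> p - \<omega> q\<bar> \<le> \<omega> \<bar>p - q\<bar>"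
proof -
  have mo: "\<And>s t. 0 \<le> s \<Longrightarrow> s \<le> t \<Longrightarrow> \<omega> s \<le> \<omega> t"
    and sa: "\<And>s t. s \<ge> 0 \<Longrightarrow> t \<ge> 0 \<Longrightarrow> \<omega> (s + t) \<le> \<omega> s + \<omega> t"
    using om unfolding modulus_of_continuity_def mono_on_def by auto
  have *: "\<bar>\<omega> p - \<omega> q\<bar> \<le> \<omega> (q - p)" if "0 \<le> p" "p \<le> q" for p q
  proof -
    have "\<omega> q = \<omega> (p + (q - p))" by simp
    also have "\<dots> \<le> \<omega> p + \<omega> (q - p)" using sa[of p "q - p"] that by simp
    finally show ?thesis using mo[of p q] that by simp
  qed
  show ?thesis
  proof (cases "p \<le> q")
    case True then show ?thesis using *[of p q] assms by simp
  next
    case False then show ?thesis using *[of q p] assms by (simp add: abs_minus_commute)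
  qed
qed



lemma sharp:
  fixes M :: "'a::{metric_space, comm_monoid_add} measure" and \<omega> :: "real \<Rightarrow> real" and h :: real
  assumes st: "standing M" and om: "modulus_of_continuity \<omega>" and hp: "h > 0"
    and fe: "fe = (\<lambda>x. max (\<omega> h - \<omega> (dist x 0)) 0)" and cd: "charge_with_density M \<nu>e fe"
  shows "sup_norm fe = sup_norm (\<lambda>x. fe x - Sbar M \<nu>e h x) + charge_norm \<nu>e h / ereal (measure M (B0 h))
          \<and> sup_norm (\<lambda>x. fe x - Sbar M \<nu>e h x) + charge_norm \<nu>e h / ereal (measure M (B0 h))
              = H_norm \<omega> fe / ereal (measure M (B0 h))
                  * ereal (set_lebesgue_integral M (B0 h) (\<lambda>u. \<omega> (dist u 0)))
                + charge_norm \<nu>e h / ereal (measure M (B0 h))"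
proof -
  let ?B = "B0 h :: 'a set" and ?m = "measure M (B0 h :: 'a set)"
  let ?I = "set_lebesgue_integral M (B0 h) (\<lambda>u::'a. \<omega> (dist u 0))"
  have mp: "?m > 0" by (rule st_measure_pos[OF st hp])
  have om0: "\<omega> 0 = 0" using om unfolding modulus_of_continuity_def by simp
  have mo: "\<And>s t. 0 \<le> s \<Longrightarrow> s \<le> t \<Longrightarrow> \<omega> s \<le> \<omega> t" by (rule om_mono[OF st om hp])
  have nn: "\<And>s. 0 \<le> s \<Longrightarrow> 0 \<le> \<omega> s" by (rule om_nn[OF st om hp])
  have fi: "integrable M fe" and nu: "\<And>Q. Q \<in> sets M \<Longrightarrow> \<nu>e Q = set_lebesgue_integral M Q fe"
    using cd unfolding charge_with_density_def by auto
  have fe_nn: "fe x \<ge> 0" for x unfolding fe by simp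
  have fe_le: "fe x \<le> \<omega> h" for x unfolding fe using nn[of "dist x 0"] nn[of h] hp by simp
  have fe0: "fe 0 = \<omega> h" unfolding fe using om0 nn[of h] hp by simp
  have fe_lip: "\<bar>fe x - fe y\<bar> \<le> 1 * \<omega> (dist x y)" for x y
  proof -
    have "\<bar>fe x - fe y\<bar> \<le> \<bar>\<omega> (dist x 0) - \<omega> (dist y 0)\<bar>" unfolding fe by (simp add: max_def abs_if)
    also have "\<dots> \<le> \<omega> \<bar>dist x 0 - dist y 0\<bar>" by (rule om_lip[OF om]) auto
    also have "\<dots> \<le> \<omega> (dist x y)"
      using abs_dist_diff_le[of x 0 y] by (intro mo) (auto simp: dist_commute)
    finally show ?thesis by simp
  qed
  have sfe: "sup_norm fe = ereal (\<omega> h)"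
  proof (rule antisym)
    show "sup_norm fe \<le> ereal (\<omega> h)" unfolding sup_norm_def
      by (rule SUP_least) (use fe_nn fe_le in simp)
    show "ereal (\<omega> h) \<le> sup_norm fe" unfolding sup_norm_def
      by (rule SUP_upper2[of 0]) (use fe0 nn[of h] hp in simp_all)
  qed
  have Hfe: "H_norm \<omega> fe = 1"
  proof (rule antisym)
    show "H_norm \<omega> fe \<le> 1" unfolding H_norm_def
    proof (rule SUP_least)
      fix p :: "'a \<times> 'a" assume "p \<in> {(x, y). x \<noteq> y}"
      then have "\<omega> (dist (fst p) (snd p)) > 0" using omega_pos[OF om] by auto
      then show "ereal (\<bar>fe (fst p) - fe (snd p)\<bar> / \<omega> (dist (fst p) (snd p))) \<le> 1"
        using fe_lip[of "fst p" "snd p"] by (simp add: divide_le_eq)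
    qed
    have "B0 h \<noteq> {0::'a}" "(0::'a) \<in> B0 h" using st_B_ne[OF st hp] hp by auto
    then obtain u :: 'a where u: "u \<in> B0 h" "u \<noteq> 0" by blast
    have wp: "\<omega> (dist u 0) > 0" using omega_pos[OF om] u by simp
    have wl: "\<omega> (dist u 0) \<le> \<omega> h" using mo[of "dist u 0" h] u by (simp add: dist_commute)
    have "\<bar>fe u - fe 0\<bar> = \<omega> (dist u 0)" using fe0 wl wp unfolding fe by simp
    then show "1 \<le> H_norm \<omega> fe" unfolding H_norm_def
      by (intro SUP_upper2[of "(u, 0)"]) (use u wp in auto)
  qed
  have Bs: "?B \<in> sets M" by (rule st_ball_sets[OF st])
  have fin: "emeasure M ?B \<noteq> \<infinity>" using st_B_fin[OF st hp] by simp
  have oi: "set_integrable M ?B (\<lambda>u. \<omega> (dist u 0))" by (rule om_int[OF st om hp])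
  have ci: "set_integrable M ?B (\<lambda>u. \<omega> h)" by (rule st_const_int[OF st hp])
  have nuB: "\<nu>e ?B = \<omega> h * ?m - ?I"
  proof -
    have "\<nu>e ?B = set_lebesgue_integral M ?B (\<lambda>u. \<omega> h - \<omega> (dist u 0))"
      unfolding nu[OF Bs] fe
    proof (rule set_lebesgue_integral_cong[OF Bs], intro allI impI)
      fix u :: 'a assume "u \<in> ?B"
      then have "\<omega> (dist u 0) \<le> \<omega> h" using mo[of "dist u 0" h] by (simp add: dist_commute)
      then show "max (\<omega> h - \<omega> (dist u 0)) 0 = \<omega> h - \<omega> (dist u 0)" by simp
    qed
    also have "\<dots> = set_lebesgue_integral M ?B (\<lambda>u. \<omega> h) - ?I"
      by (rule set_integral_diff(2)[OF ci oi])
    also have "set_lebesgue_integral M ?B (\<lambda>u::'a. \<omega> h) = \<omega> h * ?m"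
      using set_integral_const[OF Bs fin, of "\<omega> h"] by simp
    finally show ?thesis .
  qed
  have nuT: "0 \<le> \<nu>e (transl x ?B) \<and> \<nu>e (transl x ?B) \<le> \<nu>e ?B" for x
  proof -
    have Ts: "transl x ?B \<in> sets M" by (rule st_transl_sets[OF st Bs])
    have "\<nu>e (transl x ?B) = integral\<^sup>L M (\<lambda>u. indicator (transl x ?B) u * fe u)"
      unfolding nu[OF Ts] set_lebesgue_integral_def by simp
    moreover have "integral\<^sup>L M (\<lambda>u. indicator (transl x ?B) u * fe u) \<le> integral\<^sup>L M fe"
      using integrable_mult_indicator[OF Ts fi] fi fe_nn
      by (intro integral_mono) (auto simp: indicator_def)
    moreover have "0 \<le> integral\<^sup>L M (\<lambda>u. indicator (transl x ?B) u * fe u)"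
      using fe_nn by (intro integral_nonneg_AE AE_I2) (auto simp: indicator_def)
    moreover have "integral\<^sup>L M fe = \<nu>e ?B"
      unfolding nu[OF Bs] set_lebesgue_integral_def
    proof (rule Bochner_Integration.integral_cong[OF refl])
      fix u :: 'a
      show "fe u = indicator ?B u *\<^sub>R fe u"
      proof (cases "u \<in> ?B")
        case False
        then have "\<omega> h \<le> \<omega> (dist u 0)" using mo[of h "dist u 0"] hp by (simp add: dist_commute)
        then show ?thesis using False unfolding fe by simp
      qed simp
    qed
    ultimately show ?thesis by simp
  qed
  have cn: "charge_norm \<nu>e h = ereal (\<omega> h * ?m - ?I)"
  proof (rule antisym)
    show "charge_norm \<nu>e h \<le> ereal (\<omega> h * ?m - ?I)" unfolding charge_norm_def
      by (rule SUP_least) (use nuT nuB in simp)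
    show "ereal (\<omega> h * ?m - ?I) \<le> charge_norm \<nu>e h" unfolding charge_norm_def
      by (rule SUP_upper2[of 0]) (use nuB nuT[of 0] in simp_all)
  qed
  have Inn: "0 \<le> ?I"
    unfolding set_lebesgue_integral_def using nn
    by (intro integral_nonneg_AE AE_I2) (auto simp: indicator_def)
  have sd: "sup_norm (\<lambda>x. fe x - Sbar M \<nu>e h x) = ereal (?I / ?m)"
  proof (rule antisym)
    show "sup_norm (\<lambda>x. fe x - Sbar M \<nu>e h x) \<le> ereal (?I / ?m)" unfolding sup_norm_def
      by (rule SUP_least) (use pointwise[OF st om hp cd _ fe_lip] in simp)
    have "fe 0 - Sbar M \<nu>e h 0 = ?I / ?m"
      unfolding Sbar_def using fe0 nuB mp by (simp add: field_simps)
    then show "ereal (?I / ?m) \<le> sup_norm (\<lambda>x. fe x - Sbar M \<nu>e h x)" unfolding sup_norm_def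
      by (intro SUP_upper2[of 0]) (use Inn mp in simp_all)
  qed
  have e1: "charge_norm \<nu>e h / ereal ?m = ereal ((\<omega> h * ?m - ?I) / ?m)"
    unfolding cn using mp by (simp add: ereal_divide)
  have e2: "H_norm \<omega> fe / ereal ?m * ereal ?I = ereal (?I / ?m)"
    unfolding Hfe using mp by (simp add: ereal_divide one_ereal_def)
  have ar: "?I / ?m + (\<omega> h * ?m - ?I) / ?m = \<omega> h" using mp by (simp add: field_simps)
  show ?thesis unfolding sfe sd e1 e2 using ar by simp
qed



theorem theorem4:
  fixes M :: "'a::{metric_space, comm_monoid_add} measure"
    and \<omega> :: "real \<Rightarrow> real" and h :: real
    and \<nu> :: "'a set \<Rightarrow> real" and f :: "'a \<Rightarrow> real"
  assumes "standing M"
    and "modulus_of_continuity \<omega>"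
    and "h > 0"
    and "charge_with_density M \<nu> f"
    and "charge_norm \<nu> h < \<infinity>"
    and "H_norm \<omega> f < \<infinity>"
  shows "sup_norm f \<le> sup_norm (\<lambda>x. f x - Sbar M \<nu> h x) + charge_norm \<nu> h / ereal (measure M (B0 h))
       \<and> sup_norm (\<lambda>x. f x - Sbar M \<nu> h x) + charge_norm \<nu> h / ereal (measure M (B0 h))
           \<le> H_norm \<omega> f / ereal (measure M (B0 h))
               * ereal (set_lebesgue_integral M (B0 h) (\<lambda>u. \<omega> (dist u 0)))
             + charge_norm \<nu> h / ereal (measure M (B0 h))
       \<and> (\<forall>\<nu>e fe. fe = (\<lambda>x. max (\<omega> h - \<omega> (dist x 0)) 0) \<and> charge_with_density M \<nu>e fe \<longrightarrow>
            sup_norm fe = sup_norm (\<lambda>x. fe x - Sbar M \<nu>e h x) + charge_norm \<nu>e h / ereal (measure M (B0 h))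
          \<and> sup_norm (\<lambda>x. fe x - Sbar M \<nu>e h x) + charge_norm \<nu>e h / ereal (measure M (B0 h))
              = H_norm \<omega> fe / ereal (measure M (B0 h))
                  * ereal (set_lebesgue_integral M (B0 h) (\<lambda>u. \<omega> (dist u 0)))
                + charge_norm \<nu>e h / ereal (measure M (B0 h)))"
proof -
  note st = assms(1) and om = assms(2) and hp = assms(3) and cd = assms(4)
  let ?m = "measure M (B0 h :: 'a set)"
  let ?I = "set_lebesgue_integral M (B0 h) (\<lambda>u::'a. \<omega> (dist u 0))"
  have mp: "?m > 0" by (rule st_measure_pos[OF st hp])
  obtain H where H: "H \<ge> 0" "H_norm \<omega> f = ereal H" "\<And>x y. \<bar>f x - f y\<bar> \<le> H * \<omega> (dist x y)"
    using H_lemma[OF st om hp assms(6)] by blast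
  obtain C where C: "C \<ge> 0" "charge_norm \<nu> h = ereal C" "\<And>x. \<bar>\<nu> (transl x (B0 h))\<bar> \<le> C"
    using C_lemma[OF assms(5)] by blast
  have eC: "charge_norm \<nu> h / ereal ?m = ereal (C / ?m)" unfolding C(2) using mp by (simp add: ereal_divide)
  have eH: "H_norm \<omega> f / ereal ?m * ereal ?I = ereal (H * ?I / ?m)"
    unfolding H(2) using mp by (simp add: ereal_divide)
  have pw: "\<bar>f x - Sbar M \<nu> h x\<bar> \<le> H * ?I / ?m" for x
    by (rule pointwise[OF st om hp cd H(1) H(3)])
  have P1: "sup_norm f \<le> sup_norm (\<lambda>x. f x - Sbar M \<nu> h x) + ereal (C / ?m)"
    unfolding sup_norm_def
  proof (rule SUP_least)
    fix x :: 'a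
    have "\<bar>Sbar M \<nu> h x\<bar> \<le> C / ?m" unfolding Sbar_def using C(3)[of x] mp
      by (simp add: abs_divide divide_right_mono)
    then have "ereal \<bar>f x\<bar> \<le> ereal \<bar>f x - Sbar M \<nu> h x\<bar> + ereal (C / ?m)" by simp
    also have "\<dots> \<le> (SUP x. ereal \<bar>f x - Sbar M \<nu> h x\<bar>) + ereal (C / ?m)"
      by (intro add_right_mono SUP_upper) simp
    finally show "ereal \<bar>f x\<bar> \<le> (SUP x. ereal \<bar>f x - Sbar M \<nu> h x\<bar>) + ereal (C / ?m)" .
  qed
  have P2: "sup_norm (\<lambda>x. f x - Sbar M \<nu> h x) \<le> ereal (H * ?I / ?m)"
    unfolding sup_norm_def by (rule SUP_least) (use pw in simp)
  have P3: "sup_norm (\<lambda>x. f x - Sbar M \<nu> h x) + ereal (C / ?m) \<le> ereal (H * ?I / ?m) + ereal (C / ?m)"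
    by (rule add_right_mono[OF P2])
  show ?thesis
    unfolding eC eH using P1 P3 sharp[OF st om hp] by blast
qed


end
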